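(* Let \(a,b,c\) be positive integers, \(m\) a positive integer that is not a perfect square, with \(\gcd(a,b^2-c^2m)=1\), and let \(A,B\in\mathbb Z\). If \((x_0,y_0,z_0,w_0)\in\mathbb Z^4\) and \((x',y',z',w')\in\mathbb Z^4\) are both solutions of \(a(x+y\sqrt m)+(b+c\sqrt m)(z+w\sqrt m)=A+B\sqrt m\), then \(a\mid z_0-z'\) and \(a\mid w_0-w'\). *)

theory Defs
  imports Complex_Main
begin

end

theory Submission
  imports Defs
begin

lemma irr_key:
  fixes p q m :: int
  assumes m: "m > 0" and ns: "\<not> (\<exists>k::int. k ^ 2 = m)"
    and e: "of_int p + of_int q * sqrt (of_int m) = (0::real)"
  shows "p = 0 \<and> q = 0"
proof (cases "q = 0")
  case True then show ?thesis using e by simp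
next
  case False
  have "of_int q * sqrt (of_int m) = - (of_int p::real)" using e by linarith
  then have "(of_int q * sqrt (of_int m))^2 = (of_int p::real)^2" by (metis power2_minus)
  then have "(of_int q)^2 * (of_int m) = (of_int p::real)^2"
    using m by (simp add: power_mult_distrib)
  then have eq: "q^2 * m = p^2" by (metis of_int_eq_iff of_int_mult of_int_power)
  then have "q^2 dvd p^2" by (metis dvd_triv_left)
  then have "q dvd p" using pow_divides_pow_iff[of 2 q p] by simp
  then obtain k where "p = q * k" by blast
  with eq have "q^2 * m = q^2 * k^2" by (simp add: power_mult_distrib)
  then have "m = k^2" using False by simp
  then show ?thesis using ns by blast
qed

theorem lemma3:
  fixes a b c m A B x0 y0 z0 w0 x' y' z' w' :: int
  assumes "a > 0" and "b > 0" and "c > 0" and "m > 0"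
    and "\<not> (\<exists>k::int. k ^ 2 = m)"
    and "gcd a (b ^ 2 - c ^ 2 * m) = 1"
    and "of_int a * (of_int x0 + of_int y0 * sqrt (of_int m))
         + (of_int b + of_int c * sqrt (of_int m)) * (of_int z0 + of_int w0 * sqrt (of_int m))
         = of_int A + of_int B * sqrt (of_int m)"
    and "of_int a * (of_int x' + of_int y' * sqrt (of_int m))
         + (of_int b + of_int c * sqrt (of_int m)) * (of_int z' + of_int w' * sqrt (of_int m))
         = of_int A + of_int B * sqrt (of_int m)"
  shows "a dvd (z0 - z') \<and> a dvd (w0 - w')"
proof -
  define s where "s = sqrt (of_int m :: real)"
  have ss: "s * s = of_int m" using assms(4) unfolding s_def by simp
  define X where "X = x0 - x'"
  define Y where "Y = y0 - y'"
  define Z where "Z = z0 - z'"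
  define W where "W = w0 - w'"
  have "of_int a * (of_int X + of_int Y * s)
         + (of_int b + of_int c * s) * (of_int Z + of_int W * s) = (0::real)"
    using assms(7,8) unfolding s_def X_def Y_def Z_def W_def by (simp add: algebra_simps)
  then have "of_int a * of_int X + of_int b * of_int Z + of_int c * of_int W * (s * s)
      + (of_int a * of_int Y + of_int b * of_int W + of_int c * of_int Z) * s = (0::real)"
    by (simp add: algebra_simps)
  then have "of_int (a * X + b * Z + c * W * m)
      + of_int (a * Y + b * W + c * Z) * sqrt (of_int m) = (0::real)"
    using ss unfolding s_def by simp
  from irr_key[OF assms(4,5) this]
  have e1: "a * X + b * Z + c * W * m = 0" and e2: "a * Y + b * W + c * Z = 0" by auto
  have d1: "a dvd b * Z + c * m * W" using e1
    by (metis add.assoc dvd_triv_left minus_add_cancel dvd_minus_iff add_0_right mult.assoc mult.commute)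
  have d2: "a dvd c * Z + b * W" using e2
    by (metis add.assoc dvd_triv_left minus_add_cancel dvd_minus_iff add_0_right add.commute)
  have "(b^2 - c^2 * m) * Z = b * (b * Z + c * m * W) - c * m * (c * Z + b * W)"
    by (simp add: algebra_simps power2_eq_square)
  then have "a dvd (b^2 - c^2 * m) * Z" using d1 d2 by (simp add: dvd_diff)
  then have z: "a dvd Z" using assms(6) by (metis coprime_dvd_mult_right_iff is_unit_gcd one_dvd coprime_iff_gcd_eq_1)
  have "(b^2 - c^2 * m) * W = b * (c * Z + b * W) - c * (b * Z + c * m * W)"
    by (simp add: algebra_simps power2_eq_square)
  then have "a dvd (b^2 - c^2 * m) * W" using d1 d2 by (simp add: dvd_diff)
  then have w: "a dvd W" using assms(6) by (metis coprime_dvd_mult_right_iff coprime_iff_gcd_eq_1)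
  show ?thesis using z w unfolding Z_def W_def by simp
qed

end
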